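(* Let $(E,d)$ be a metric space whose Borel $\sigma$-algebra $\mathcal{B}(E)$ makes it a standard Borel space, let $\nu$ be a Radon probability measure, and let $A\subset\mathrm{Supp}(\nu)$ be closed. If the MaxEnt posterior $\nu(\cdot\mid A)$ exists, then $\nu(\cdot\mid A)$ is a Radon probability measure and $\nu(E\setminus A\mid A)=0$.
   Context: Fix $R>0$. For each $\sigma>0$ consider $\inf_\mu\{\mathrm{Ent}_\nu(\mu):\mu(E)=1,\ \int_E d_R(x,A)^2\,d\mu(x)\le\sigma^2\}$, with $d(x,A)=\inf_{y\in A}d(x,y)$, $d_R=\min(d,R)$, $\mathrm{Ent}_\nu(\mu)=\int\frac{d\mu}{d\nu}\ln\frac{d\mu}{d\nu}\,d\nu$ if $\mu\ll\nu$, $+\infty$ otherwise. If for every $\sigma>0$ the infimum is attained by a unique $\mu_\sigma$ and $\mu_\sigma$ converges weakly as $\sigma\to0$, the limit is the MaxEnt posterior $\nu(\cdot\mid A)$. $\mathrm{Supp}(\nu)$ is the complement of the union of all $\nu$-null open sets. *)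

theory Defs
  imports "HOL-Probability.Probability"
begin

text \<open>The measurable space (E, B(E)) (E = UNIV of a metric type, B(E) = borel) is standard
  Borel: B(E) is the Borel sigma-algebra of some Polish topology on E.\<close>
definition standard_borel_space :: "'a::metric_space itself \<Rightarrow> bool" where
  "standard_borel_space _ \<longleftrightarrow>
     (\<exists>X :: 'a topology. topspace X = UNIV \<and> completely_metrizable_space X \<and> separable_space X
        \<and> sigma_sets UNIV {U. openin X U} = sets (borel :: 'a measure))"

definition radon_measure :: "'a::metric_space measure \<Rightarrow> bool" where
  "radon_measure \<mu> \<longleftrightarrow> sets \<mu> = sets borel \<and> finite_measure \<mu> \<and>
     (\<forall>B\<in>sets borel. emeasure \<mu> B = (SUP K\<in>{K. compact K \<and> K \<subseteq> B}. emeasure \<mu> K))"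

definition supp :: "'a::topological_space measure \<Rightarrow> 'a set" where
  "supp \<nu> = - \<Union>{U. open U \<and> emeasure \<nu> U = 0}"

text \<open>Truncated distance d_R(x,A) = min(d(x,A),R), with the convention d(x,{}) = +\<infinity>.\<close>
definition distR :: "real \<Rightarrow> 'a::metric_space set \<Rightarrow> 'a \<Rightarrow> real" where
  "distR R A x = (if A = {} then R else min (infdist x A) R)"

text \<open>Relative entropy Ent_nu(mu) = int (dmu/dnu) ln (dmu/dnu) dnu if mu << nu, +\<infinity> otherwise.
  The negative part of t ln t is bounded, so non-integrability means the integral is +\<infinity>.\<close>
definition rel_entropy :: "'a measure \<Rightarrow> 'a measure \<Rightarrow> ereal" where
  "rel_entropy \<nu> \<mu> =
     (if absolutely_continuous \<nu> \<mu> then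
        (let g = (\<lambda>x. enn2real (RN_deriv \<nu> \<mu> x) * ln (enn2real (RN_deriv \<nu> \<mu> x)))
         in if integrable \<nu> g then ereal (integral\<^sup>L \<nu> g) else \<infinity>)
      else \<infinity>)"

definition maxent_feasible :: "real \<Rightarrow> 'a::metric_space set \<Rightarrow> real \<Rightarrow> 'a measure \<Rightarrow> bool" where
  "maxent_feasible R A \<sigma> \<mu> \<longleftrightarrow> sets \<mu> = sets borel \<and> prob_space \<mu> \<and>
     integral\<^sup>L \<mu> (\<lambda>x. (distR R A x)\<^sup>2) \<le> \<sigma>\<^sup>2"

definition maxent_minimizer ::
  "'a::metric_space measure \<Rightarrow> real \<Rightarrow> 'a set \<Rightarrow> real \<Rightarrow> 'a measure \<Rightarrow> bool" where
  "maxent_minimizer \<nu> R A \<sigma> \<mu> \<longleftrightarrow> maxent_feasible R A \<sigma> \<mu> \<and>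
     rel_entropy \<nu> \<mu> = (INF \<mu>'\<in>{\<mu>'. maxent_feasible R A \<sigma> \<mu>'}. rel_entropy \<nu> \<mu>')"

definition weak_conv_at_0 :: "(real \<Rightarrow> 'a::metric_space measure) \<Rightarrow> 'a measure \<Rightarrow> bool" where
  "weak_conv_at_0 \<mu>s \<pi> \<longleftrightarrow> sets \<pi> = sets borel \<and> finite_measure \<pi> \<and>
     (\<forall>f::'a \<Rightarrow> real. continuous_on UNIV f \<and> bounded (range f) \<longrightarrow>
        ((\<lambda>\<sigma>. integral\<^sup>L (\<mu>s \<sigma>) f) \<longlongrightarrow> integral\<^sup>L \<pi> f) (at_right 0))"

definition maxent_posterior ::
  "'a::metric_space measure \<Rightarrow> real \<Rightarrow> 'a set \<Rightarrow> 'a measure \<Rightarrow> bool" where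
  "maxent_posterior \<nu> R A \<pi> \<longleftrightarrow>
     (\<forall>\<sigma>>0. \<exists>!\<mu>. maxent_minimizer \<nu> R A \<sigma> \<mu>) \<and>
     weak_conv_at_0 (\<lambda>\<sigma>. THE \<mu>. maxent_minimizer \<nu> R A \<sigma> \<mu>) \<pi>"

end

theory Submission
  imports Defs
begin

lemma geom_sum_bound:
  assumes fm: "finite_measure \<mu>" and X: "\<And>n. X n \<in> sets \<mu>"
    and b: "\<And>n. measure \<mu> (X n) \<le> c * (1/2)^n"
  shows "measure \<mu> (\<Union>n. X n) \<le> 2 * c"
proof -
  interpret finite_measure \<mu> by (rule fm)
  have s: "(\<lambda>n. c * (1/2)^n) sums (c * 2)"
    using sums_mult[OF geometric_sums[of "1/2::real"], of c] by simp
  have sm: "summable (\<lambda>n. measure \<mu> (X n))"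
    by (rule summable_comparison_test[OF _ sums_summable[OF s]]) (use b in auto)
  have "measure \<mu> (\<Union>n. X n) \<le> (\<Sum>n. measure \<mu> (X n))"
    by (rule finite_measure_subadditive_countably) (use X sm in auto)
  also have "\<dots> \<le> (\<Sum>n. c * (1/2)^n)"
    by (rule suminf_le[OF b sm sums_summable[OF s]])
  also have "\<dots> = 2 * c" using sums_unique[OF s] by simp
  finally show ?thesis .
qed

lemma closed_regular_abs:
  fixes m :: "'a \<Rightarrow> 'a \<Rightarrow> real" and \<mu> :: "'a measure"
  assumes ms: "Metric_space UNIV m" and fm: "finite_measure \<mu>"
    and sets: "sets \<mu> = sigma_sets UNIV {U. openin (Metric_space.mtopology UNIV m) U}"
    and B: "B \<in> sets \<mu>"
  shows "\<forall>e>0. \<exists>F G. closedin (Metric_space.mtopology UNIV m) F \<and> openin (Metric_space.mtopology UNIV m) G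
      \<and> F \<subseteq> B \<and> B \<subseteq> G \<and> measure \<mu> (G - F) < e"
proof -
  interpret Metric_space UNIV m by (rule ms)
  interpret finite_measure \<mu> by (rule fm)
  have op: "U \<in> sets \<mu>" if "openin mtopology U" for U
    using that unfolding sets by (auto intro: sigma_sets.Basic)
  have cl: "F \<in> sets \<mu>" if "closedin mtopology F" for F
  proof -
    have o: "openin mtopology (UNIV - F)" using that by (simp add: closedin_def)
    have "UNIV - (UNIV - F) \<in> sigma_sets UNIV {U. openin mtopology U}"
      by (rule sigma_sets.Compl, rule sigma_sets.Basic) (use o in simp)
    moreover have "UNIV - (UNIV - F) = F" by blast
    ultimately show ?thesis unfolding sets by simp
  qed
  have "B \<in> sigma_sets UNIV {U. openin mtopology U}" using B sets by simp
  then show ?thesis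
  proof (induction rule: sigma_sets.induct)
    case (Basic G)
    hence G: "openin mtopology G" by simp
    define Fk where "Fk k = UNIV - (\<Union>y\<in>UNIV - G. mball y (1/Suc k))" for k :: nat
    have Fkc: "closedin mtopology (Fk k)" for k
      unfolding Fk_def by (intro closedin_diff) auto
    have FkG: "Fk k \<subseteq> G" for k
      unfolding Fk_def by auto
    have inc: "incseq Fk"
    proof (rule incseq_SucI)
      fix k
      have "mball y (1/Suc (Suc k)) \<subseteq> mball y (1/Suc k)" for y
        by (rule mball_subset_concentric) (simp add: frac_le)
      thus "Fk k \<subseteq> Fk (Suc k)" unfolding Fk_def by blast
    qed
    have UF: "(\<Union>k. Fk k) = G"
    proof
      show "(\<Union>k. Fk k) \<subseteq> G" using FkG by blast
      show "G \<subseteq> (\<Union>k. Fk k)"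
      proof
        fix x assume "x \<in> G"
        then obtain r where r: "r > 0" "mball x r \<subseteq> G" using G openin_mtopology by blast
        obtain k where k: "1 / real (Suc k) < r" using reals_Archimedean[OF r(1)]
          by (auto simp: inverse_eq_divide)
        have "x \<in> Fk k"
        proof (rule ccontr)
          assume "x \<notin> Fk k"
          then obtain y where y: "y \<notin> G" "m y x < 1/Suc k" unfolding Fk_def by auto
          hence "y \<in> mball x r" using k by (simp add: commute)
          thus False using r y by blast
        qed
        thus "x \<in> (\<Union>k. Fk k)" by blast
      qed
    qed
    have "(\<lambda>k. measure \<mu> (Fk k)) \<longlonglongrightarrow> measure \<mu> (\<Union>k. Fk k)"
      by (rule finite_Lim_measure_incseq) (use Fkc cl inc in auto)
    hence lim: "(\<lambda>k. measure \<mu> (Fk k)) \<longlonglongrightarrow> measure \<mu> G" using UF by simp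
    show ?case
    proof (intro allI impI)
      fix e :: real assume e: "e > 0"
      from LIMSEQ_D[OF lim e] obtain k where "norm (measure \<mu> (Fk k) - measure \<mu> G) < e"
        by blast
      hence "measure \<mu> G - measure \<mu> (Fk k) < e" by simp
      moreover have "measure \<mu> (G - Fk k) = measure \<mu> G - measure \<mu> (Fk k)"
        using finite_measure_Diff[OF op[OF G] cl[OF Fkc] FkG] .
      ultimately have "measure \<mu> (G - Fk k) < e" by simp
      thus "\<exists>F Ga. closedin mtopology F \<and> openin mtopology Ga \<and> F \<subseteq> G \<and> G \<subseteq> Ga \<and> measure \<mu> (Ga - F) < e"
        using Fkc[of k] FkG[of k] G by blast
    qed
  next
    case Empty
    show ?case
    proof (intro allI impI)
      fix e :: real assume e: "e > 0"
      show "\<exists>F G. closedin mtopology F \<and> openin mtopology G \<and> F \<subseteq> {} \<and> {} \<subseteq> G \<and> measure \<mu> (G - F) < e"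
        by (rule exI[of _ "{}"], rule exI[of _ "{}"]) (simp add: e)
    qed
  next
    case (Compl a)
    show ?case
    proof (intro allI impI)
      fix e :: real assume "e > 0"
      from Compl.IH[rule_format, OF this] obtain F G where FG: "closedin mtopology F" "openin mtopology G" "F \<subseteq> a" "a \<subseteq> G" "measure \<mu> (G - F) < e"
        by blast
      have eq: "(UNIV - F) - (UNIV - G) = G - F" by blast
      have c: "closedin mtopology (UNIV - G)"
        using closedin_diff[OF closedin_topspace FG(2)] by simp
      have o: "openin mtopology (UNIV - F)"
        using openin_diff[OF openin_topspace FG(1)] by simp
      have "UNIV - G \<subseteq> UNIV - a" "UNIV - a \<subseteq> UNIV - F" using FG(3,4) by blast+
      thus "\<exists>Fa Ga. closedin mtopology Fa \<and> openin mtopology Ga \<and> Fa \<subseteq> UNIV - a \<and> UNIV - a \<subseteq> Ga \<and> measure \<mu> (Ga - Fa) < e"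
        using c o eq FG(5) by (intro exI[of _ "UNIV - G"] exI[of _ "UNIV - F"] conjI) simp_all
    qed
  next
    case (Union A)
    show ?case
    proof (intro allI impI)
      fix e :: real assume e: "e > 0"
      have "\<forall>i. \<exists>FG. closedin mtopology (fst FG) \<and> openin mtopology (snd FG) \<and> fst FG \<subseteq> A i \<and> A i \<subseteq> snd FG
          \<and> measure \<mu> (snd FG - fst FG) < e/4 * (1/2)^i"
      proof
        fix i
        have "e/4 * (1/2)^i > 0" using e by simp
        from Union.IH[of i, rule_format, OF this] obtain F G where "closedin mtopology F" "openin mtopology G" "F \<subseteq> A i" "A i \<subseteq> G" "measure \<mu> (G - F) < e/4 * (1/2)^i"
          by blast
        thus "\<exists>FG. closedin mtopology (fst FG) \<and> openin mtopology (snd FG) \<and> fst FG \<subseteq> A i \<and> A i \<subseteq> snd FG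
          \<and> measure \<mu> (snd FG - fst FG) < e/4 * (1/2)^i" by (intro exI[of _ "(F,G)"]) simp
      qed
      from choice[OF this] obtain FG where FG: "\<And>i. closedin mtopology (fst (FG i))" "\<And>i. openin mtopology (snd (FG i))"
        "\<And>i. fst (FG i) \<subseteq> A i" "\<And>i. A i \<subseteq> snd (FG i)" "\<And>i. measure \<mu> (snd (FG i) - fst (FG i)) < e/4 * (1/2)^i"
        by blast
      define F where "F i = fst (FG i)" for i
      define G where "G i = snd (FG i)" for i
      note FG = FG[folded F_def G_def]
      define H where "H = (\<Union>i. F i)"
      define HN where "HN N = (\<Union>i<N. F i)" for N
      have Fs: "F i \<in> sets \<mu>" for i using cl[OF FG(1)] .
      have Gs: "G i \<in> sets \<mu>" for i using op[OF FG(2)] .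
      have "measure \<mu> (\<Union>i. G i - F i) \<le> 2 * (e/4)"
        by (rule geom_sum_bound[OF fm]) (use Fs Gs FG(5) in \<open>auto intro: less_imp_le\<close>)
      moreover have "(\<Union>i. G i) - H \<subseteq> (\<Union>i. G i - F i)" unfolding H_def by blast
      moreover have "(\<Union>i. G i - F i) \<in> sets \<mu>" using Fs Gs by (intro sets.countable_UN) auto
      ultimately have m1: "measure \<mu> ((\<Union>i. G i) - H) \<le> e/2"
        using finite_measure_mono[of "(\<Union>i. G i) - H" "(\<Union>i. G i - F i)"] by linarith
      have incHN: "incseq HN" unfolding incseq_def HN_def by (intro allI impI UN_mono) auto
      have "(\<lambda>N. measure \<mu> (HN N)) \<longlonglongrightarrow> measure \<mu> (\<Union>N. HN N)"
        by (rule finite_Lim_measure_incseq[OF _ incHN]) (auto simp: HN_def Fs intro!: sets.finite_UN)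
      moreover have "(\<Union>N. HN N) = H" unfolding HN_def H_def by blast
      ultimately have "(\<lambda>N. measure \<mu> (HN N)) \<longlonglongrightarrow> measure \<mu> H" by simp
      from LIMSEQ_D[OF this, of "e/2"] e obtain N where "norm (measure \<mu> (HN N) - measure \<mu> H) < e/2"
        by auto
      hence m2: "measure \<mu> H - measure \<mu> (HN N) < e/2" by (simp only: real_norm_def; arith)
      have HNs: "HN N \<in> sets \<mu>" unfolding HN_def using Fs by auto
      have Hs: "H \<in> sets \<mu>" unfolding H_def using Fs by auto
      have Us: "(\<Union>i. G i) \<in> sets \<mu>" using Gs by auto
      have "measure \<mu> (H - HN N) = measure \<mu> H - measure \<mu> (HN N)"
        by (rule finite_measure_Diff[OF Hs HNs]) (auto simp: HN_def H_def)
      moreover have "(\<Union>i. G i) - HN N \<subseteq> ((\<Union>i. G i) - H) \<union> (H - HN N)" by blast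
      hence "measure \<mu> ((\<Union>i. G i) - HN N) \<le> measure \<mu> ((\<Union>i. G i) - H) + measure \<mu> (H - HN N)"
        using finite_measure_mono[of "(\<Union>i. G i) - HN N" "((\<Union>i. G i) - H) \<union> (H - HN N)"]
          measure_Un_le[of "(\<Union>i. G i) - H" \<mu> "H - HN N"] HNs Hs Us by auto
      ultimately have "measure \<mu> ((\<Union>i. G i) - HN N) < e" using m1 m2 by linarith
      moreover have "closedin mtopology (HN N)" unfolding HN_def using FG(1) by (intro closedin_Union) auto
      moreover have "openin mtopology (\<Union>i. G i)" using FG(2) by auto
      moreover have "HN N \<subseteq> (\<Union>i. A i)" "(\<Union>i. A i) \<subseteq> (\<Union>i. G i)" unfolding HN_def using FG(3,4) by blast+
      ultimately show "\<exists>F G. closedin mtopology F \<and> openin mtopology G \<and> F \<subseteq> \<Union> (range A) \<and> \<Union> (range A) \<subseteq> G \<and> measure \<mu> (G - F) < e"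
        by (intro exI[of _ "HN N"] exI[of _ "\<Union>i. G i"] conjI) simp_all
    qed
  qed
qed

lemma openin_sets_abs:
  assumes "sets \<mu> = sigma_sets UNIV {U. openin T U}" "openin T U"
  shows "U \<in> sets \<mu>"
  using assms by (auto intro: sigma_sets.Basic)

lemma closedin_sets_abs:
  assumes s: "sets \<mu> = sigma_sets UNIV {U. openin T U}" and t: "topspace T = UNIV" and c: "closedin T F"
  shows "F \<in> sets \<mu>"
proof -
  have o: "openin T (UNIV - F)" using c t by (simp add: closedin_def)
  have "UNIV - (UNIV - F) \<in> sigma_sets UNIV {U. openin T U}"
    by (rule sigma_sets.Compl, rule sigma_sets.Basic) (use o in simp)
  moreover have "UNIV - (UNIV - F) = F" by blast
  ultimately show ?thesis using s by simp
qed

lemma tb_lemma: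
  assumes ms: "Metric_space M d" and SM: "S \<subseteq> M"
    and cov: "\<And>\<epsilon>. \<epsilon>>0 \<Longrightarrow> \<exists>K. finite K \<and> K \<subseteq> M \<and> S \<subseteq> (\<Union>x\<in>K. Metric_space.mball M d x \<epsilon>)"
  shows "Metric_space.mtotally_bounded M d S"
proof -
  interpret Metric_space M d by (rule ms)
  show ?thesis unfolding mtotally_bounded_def
  proof (intro allI impI)
    fix \<epsilon> :: real assume e: "\<epsilon> > 0"
    then obtain K where K: "finite K" "K \<subseteq> M" "S \<subseteq> (\<Union>x\<in>K. mball x (\<epsilon>/2))"
      using cov[of "\<epsilon>/2"] by auto
    define K1 where "K1 = {x\<in>K. mball x (\<epsilon>/2) \<inter> S \<noteq> {}}"
    have "\<forall>x\<in>K1. \<exists>y. y \<in> mball x (\<epsilon>/2) \<inter> S" unfolding K1_def by blast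
    then obtain s where s: "\<And>x. x \<in> K1 \<Longrightarrow> s x \<in> mball x (\<epsilon>/2) \<inter> S" by metis
    have "finite (s ` K1)" using K(1) unfolding K1_def by auto
    moreover have "s ` K1 \<subseteq> S" using s by blast
    moreover have "S \<subseteq> (\<Union>x\<in>s ` K1. mball x \<epsilon>)"
    proof
      fix y assume y: "y \<in> S"
      then obtain x where x: "x \<in> K" "y \<in> mball x (\<epsilon>/2)" using K(3) by blast
      hence xK1: "x \<in> K1" using y unfolding K1_def by blast
      have sx: "s x \<in> M" "d x (s x) < \<epsilon>/2" using s[OF xK1] by auto
      have "d (s x) y \<le> d (s x) x + d x y" using sx x by (intro triangle) auto
      also have "\<dots> < \<epsilon>" using sx x by (simp add: commute)
      finally have "y \<in> mball (s x) \<epsilon>" using sx x by simp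
      thus "y \<in> (\<Union>x\<in>s ` K1. mball x \<epsilon>)" using xK1 by blast
    qed
    ultimately show "\<exists>K. finite K \<and> K \<subseteq> S \<and> S \<subseteq> (\<Union>x\<in>K. mball x \<epsilon>)" by blast
  qed
qed

lemma ulam_abs:
  fixes m :: "'a \<Rightarrow> 'a \<Rightarrow> real" and \<mu> :: "'a measure"
  assumes ms: "Metric_space UNIV m" and mc: "Metric_space.mcomplete UNIV m"
    and sep: "separable_space (Metric_space.mtopology UNIV m)"
    and fm: "finite_measure \<mu>"
    and sets: "sets \<mu> = sigma_sets UNIV {U. openin (Metric_space.mtopology UNIV m) U}"
    and e: "e > 0"
  shows "\<exists>K. compactin (Metric_space.mtopology UNIV m) K \<and> measure \<mu> (UNIV - K) < e"
proof -
  interpret Metric_space UNIV m by (rule ms)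
  interpret finite_measure \<mu> by (rule fm)
  have op: "U \<in> sets \<mu>" if "openin mtopology U" for U
    using openin_sets_abs[OF sets that] .
  have cl: "F \<in> sets \<mu>" if "closedin mtopology F" for F
    using closedin_sets_abs[OF sets _ that] by simp
  obtain C where C: "countable C" "mtopology closure_of C = UNIV"
    using sep unfolding separable_space_def by auto
  have Cne: "C \<noteq> {}" using C(2) by auto
  define c where "c = from_nat_into C"
  define W where "W n N = (\<Union>j<N. mball (c j) (1/Suc n))" for n N :: nat
  have Wo: "openin mtopology (W n N)" for n N unfolding W_def by auto
  have Winc: "incseq (W n)" for n
    unfolding incseq_def W_def by (intro allI impI UN_mono) auto
  have WU: "(\<Union>N. W n N) = UNIV" for n
  proof -
    have "x \<in> (\<Union>N. W n N)" for x
    proof -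
      have "x \<in> mtopology closure_of C" using C(2) by simp
      hence "\<forall>r>0. \<exists>y\<in>C. y \<in> mball x r" unfolding metric_closure_of by blast
      from this[rule_format, of "1/Suc n"] obtain y where y: "y \<in> C" "y \<in> mball x (1/Suc n)"
        by auto
      define j where "j = to_nat_on C y"
      have cj: "c j = y" unfolding c_def j_def using from_nat_into_to_nat_on[OF C(1) y(1)] .
      have "x \<in> mball (c j) (1/Suc n)" using y(2) cj by (simp add: commute)
      hence "x \<in> W n (Suc j)" unfolding W_def by blast
      thus ?thesis by blast
    qed
    thus ?thesis by blast
  qed
  have "\<forall>n. \<exists>N. measure \<mu> (UNIV - W n N) < e/4 * (1/2)^n"
  proof
    fix n
    have "(\<lambda>N. measure \<mu> (W n N)) \<longlonglongrightarrow> measure \<mu> (\<Union>N. W n N)"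
      by (rule finite_Lim_measure_incseq[OF _ Winc]) (use op Wo in auto)
    hence lim: "(\<lambda>N. measure \<mu> (W n N)) \<longlonglongrightarrow> measure \<mu> UNIV" using WU by simp
    have "e/4 * (1/2)^n > 0" using e by simp
    from LIMSEQ_D[OF lim this] obtain N where "norm (measure \<mu> (W n N) - measure \<mu> UNIV) < e/4 * (1/2)^n"
      by blast
    hence "measure \<mu> UNIV - measure \<mu> (W n N) < e/4 * (1/2)^n" by (simp only: real_norm_def; arith)
    moreover have "measure \<mu> (UNIV - W n N) = measure \<mu> UNIV - measure \<mu> (W n N)"
      by (rule finite_measure_Diff) (use op[OF Wo] op[OF openin_topspace] in auto)
    ultimately show "\<exists>N. measure \<mu> (UNIV - W n N) < e/4 * (1/2)^n" by (intro exI[of _ N]) linarith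
  qed
  from choice[OF this] obtain NN where NN: "\<And>n. measure \<mu> (UNIV - W n (NN n)) < e/4 * (1/2)^n" by blast
  define S where "S = (\<Inter>n. W n (NN n))"
  have "measure \<mu> (\<Union>n. UNIV - W n (NN n)) \<le> 2 * (e/4)"
    by (rule geom_sum_bound[OF fm]) (use NN op[OF Wo] op[OF openin_topspace] in \<open>auto intro: less_imp_le\<close>)
  moreover have "(\<Union>n. UNIV - W n (NN n)) = UNIV - S" unfolding S_def by blast
  ultimately have mS: "measure \<mu> (UNIV - S) \<le> e/2" by simp
  have tb: "mtotally_bounded S"
  proof (rule tb_lemma[OF ms])
    show "S \<subseteq> UNIV" by simp
    fix \<epsilon> :: real assume "\<epsilon> > 0"
    then obtain n where n: "inverse (real (Suc n)) < \<epsilon>" using reals_Archimedean by blast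
    have "S \<subseteq> W n (NN n)" unfolding S_def by blast
    also have "\<dots> \<subseteq> (\<Union>x\<in>c ` {..<NN n}. mball x \<epsilon>)"
      unfolding W_def using n mball_subset_concentric[of "1/Suc n" \<epsilon>]
      by (auto simp: inverse_eq_divide)
    finally show "\<exists>K. finite K \<and> K \<subseteq> UNIV \<and> S \<subseteq> (\<Union>x\<in>K. mball x \<epsilon>)" by blast
  qed
  define K where "K = mtopology closure_of S"
  have Kc: "compactin mtopology K"
    using tb mtotally_bounded_eq_compact_closure_of[OF mc] unfolding K_def by blast
  have SK: "UNIV - K \<subseteq> UNIV - S" unfolding K_def using closure_of_subset[of S mtopology] by auto
  have Us: "UNIV \<in> sets \<mu>" using op[OF openin_topspace] by simp
  have Ss: "S \<in> sets \<mu>" unfolding S_def using op[OF Wo] by (intro sets.countable_INT) auto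
  have "measure \<mu> (UNIV - K) \<le> measure \<mu> (UNIV - S)"
    by (rule finite_measure_mono[OF SK]) (rule sets.Diff[OF Us Ss])
  hence "measure \<mu> (UNIV - K) < e" using mS e by linarith
  thus ?thesis using Kc by blast
qed

lemma tight_main:
  fixes \<pi> :: "'a::metric_space measure" and m :: "'a \<Rightarrow> 'a \<Rightarrow> real" and U :: "nat \<Rightarrow> 'a set"
  assumes fm: "finite_measure \<pi>" and sb: "sets \<pi> = sets borel"
    and ms: "Metric_space UNIV m" and mc: "Metric_space.mcomplete UNIV m"
    and sep: "separable_space (Metric_space.mtopology UNIV m)"
    and sig: "sigma_sets UNIV {U. openin (Metric_space.mtopology UNIV m) U} = sets (borel :: 'a measure)"
    and A: "closed A" and A0: "emeasure \<pi> (UNIV - A) = 0"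
    and Uo: "\<And>n. open (U n)"
    and base: "\<And>x c. x \<in> A \<Longrightarrow> open c \<Longrightarrow> x \<in> c \<Longrightarrow> \<exists>n. x \<in> U n \<and> U n \<subseteq> c"
    and B: "B \<in> sets borel" and e: "e > 0"
  shows "\<exists>K. compact K \<and> K \<subseteq> B \<and> measure \<pi> B \<le> measure \<pi> K + e"
proof -
  interpret Metric_space UNIV m by (rule ms)
  interpret finite_measure \<pi> by (rule fm)
  have sets': "sets \<pi> = sigma_sets UNIV {U. openin mtopology U}" using sb sig by simp
  have op: "V \<in> sets \<pi>" if "openin mtopology V" for V
    using openin_sets_abs[OF sets' that] .
  have cl: "F \<in> sets \<pi>" if "closedin mtopology F" for F
    using closedin_sets_abs[OF sets' _ that] by simp
  have Us: "UNIV \<in> sets \<pi>" using op[OF openin_topspace] by simp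
  have e4: "e/4 > 0" using e by simp
  from ulam_abs[OF ms mc sep fm sets' e4] obtain K0 where
    K0: "compactin mtopology K0" "measure \<pi> (UNIV - K0) < e/4" by blast
  have K0s: "K0 \<in> sets \<pi>" using cl[OF compactin_imp_closedin[OF Hausdorff_space_mtopology K0(1)]] .
  have BA: "B \<inter> A \<in> sets \<pi>" using B A sb by auto
  from closed_regular_abs[OF ms fm sets' BA, rule_format, OF e4] obtain F G0 where
    FG0: "closedin mtopology F" "openin mtopology G0" "F \<subseteq> B \<inter> A" "B \<inter> A \<subseteq> G0" "measure \<pi> (G0 - F) < e/4"
    by blast
  have Fs: "F \<in> sets \<pi>" using cl[OF FG0(1)] .
  have mF: "measure \<pi> ((B \<inter> A) - F) < e/4"
  proof -
    have "measure \<pi> ((B \<inter> A) - F) \<le> measure \<pi> (G0 - F)"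
      by (rule finite_measure_mono) (use FG0(4) op[OF FG0(2)] Fs in auto)
    thus ?thesis using FG0(5) by linarith
  qed
  have "\<forall>n. \<exists>FG. closedin mtopology (fst FG) \<and> openin mtopology (snd FG) \<and> fst FG \<subseteq> U n \<and> U n \<subseteq> snd FG
          \<and> measure \<pi> (snd FG - fst FG) < e/8 * (1/2)^n"
  proof
    fix n
    have Un: "U n \<in> sets \<pi>" using Uo[of n] sb by auto
    have "e/8 * (1/2)^n > 0" using e by simp
    from closed_regular_abs[OF ms fm sets' Un, rule_format, OF this] obtain F1 G1 where
      "closedin mtopology F1" "openin mtopology G1" "F1 \<subseteq> U n" "U n \<subseteq> G1" "measure \<pi> (G1 - F1) < e/8 * (1/2)^n"
      by blast
    thus "\<exists>FG. closedin mtopology (fst FG) \<and> openin mtopology (snd FG) \<and> fst FG \<subseteq> U n \<and> U n \<subseteq> snd FG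
          \<and> measure \<pi> (snd FG - fst FG) < e/8 * (1/2)^n" by (intro exI[of _ "(F1,G1)"]) simp
  qed
  from choice[OF this] obtain FG where FG: "\<And>n. closedin mtopology (fst (FG n))" "\<And>n. openin mtopology (snd (FG n))"
    "\<And>n. fst (FG n) \<subseteq> U n" "\<And>n. U n \<subseteq> snd (FG n)" "\<And>n. measure \<pi> (snd (FG n) - fst (FG n)) < e/8 * (1/2)^n"
    by blast
  define Fn where "Fn n = fst (FG n)" for n
  define Gn where "Gn n = snd (FG n)" for n
  note FG = FG[folded Fn_def Gn_def]
  define L where "L = F \<inter> (\<Inter>n. Fn n \<union> (UNIV - Gn n))"
  define K where "K = L \<inter> K0"
  have Lc: "closedin mtopology L"
  proof -
    have "closedin mtopology (Fn n \<union> (UNIV - Gn n))" for n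
      using closedin_Un[OF FG(1)[of n] closedin_diff[OF closedin_topspace FG(2)[of n]]] by simp
    hence "closedin mtopology (\<Inter>n. Fn n \<union> (UNIV - Gn n))" by (intro closedin_Inter) auto
    thus ?thesis unfolding L_def using FG0(1) by (intro closedin_Int)
  qed
  have Kcin: "compactin mtopology K" unfolding K_def by (rule closed_Int_compactin[OF Lc K0(1)])
  have KBA: "K \<subseteq> B \<inter> A" unfolding K_def L_def using FG0(3) by blast
  have onK: "x \<in> Fn n" if "x \<in> K" "x \<in> Gn n" for x n
    using that unfolding K_def L_def by blast
  have Kcomp: "compact K"
    unfolding compact_eq_Heine_Borel
  proof (intro allI impI)
    fix C :: "'a set set" assume C: "(\<forall>c\<in>C. open c) \<and> K \<subseteq> \<Union>C"
    define I where "I = {n. \<exists>c\<in>C. U n \<subseteq> c}"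
    have cov: "K \<subseteq> \<Union>(Gn ` I)"
    proof
      fix x assume xK: "x \<in> K"
      then obtain c where c: "c \<in> C" "x \<in> c" using C by blast
      have "x \<in> A" using xK KBA by blast
      then obtain n where n: "x \<in> U n" "U n \<subseteq> c" using base c C by blast
      have "n \<in> I" unfolding I_def using n c by blast
      moreover have "x \<in> Gn n" using n FG(4) by blast
      ultimately show "x \<in> \<Union>(Gn ` I)" by blast
    qed
    have "\<forall>V\<in>Gn ` I. openin mtopology V" using FG(2) by blast
    with Kcin cov obtain \<F> where \<F>: "finite \<F>" "\<F> \<subseteq> Gn ` I" "K \<subseteq> \<Union>\<F>"
      unfolding compactin_def by meson
    from finite_subset_image[OF \<F>(1,2)] obtain I' where I': "I' \<subseteq> I" "finite I'" "\<F> = Gn ` I'"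
      by blast
    have "\<forall>n\<in>I. \<exists>c. c \<in> C \<and> U n \<subseteq> c" unfolding I_def by blast
    then obtain cf where cf: "\<And>n. n \<in> I \<Longrightarrow> cf n \<in> C \<and> U n \<subseteq> cf n" by metis
    have "cf ` I' \<subseteq> C" using cf I'(1) by blast
    moreover have "finite (cf ` I')" using I'(2) by simp
    moreover have "K \<subseteq> \<Union>(cf ` I')"
    proof
      fix x assume xK: "x \<in> K"
      then obtain n where n: "n \<in> I'" "x \<in> Gn n" using \<F>(3) I'(3) by blast
      have "x \<in> Fn n" using onK[OF xK n(2)] .
      hence "x \<in> U n" using FG(3) by blast
      hence "x \<in> cf n" using cf[of n] n(1) I'(1) by blast
      thus "x \<in> \<Union>(cf ` I')" using n(1) by blast
    qed
    ultimately show "\<exists>D\<subseteq>C. finite D \<and> K \<subseteq> \<Union>D" by blast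
  qed
  have Ks: "K \<in> sets \<pi>" using Kcomp sb by (auto intro: borel_closed compact_imp_closed)
  have Bs: "B \<in> sets \<pi>" using B sb by simp
  have As: "A \<in> sets \<pi>" using A sb by auto
  have Fns: "Fn n \<in> sets \<pi>" for n using cl[OF FG(1)] .
  have Gns: "Gn n \<in> sets \<pi>" for n using op[OF FG(2)] .
  define D where "D = (\<Union>n. Gn n - Fn n)"
  have Ds: "D \<in> sets \<pi>" unfolding D_def using Fns Gns by (intro sets.countable_UN) auto
  have mD: "measure \<pi> D \<le> 2 * (e/8)" unfolding D_def
    by (rule geom_sum_bound[OF fm]) (use Fns Gns FG(5) in \<open>auto intro: less_imp_le\<close>)
  have mA: "measure \<pi> (B - A) = 0"
  proof -
    have "measure \<pi> (B - A) \<le> measure \<pi> (UNIV - A)"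
      by (rule finite_measure_mono) (use Us As in auto)
    moreover have "measure \<pi> (UNIV - A) = 0" using A0 by (simp add: measure_def)
    ultimately show ?thesis using measure_nonneg[of \<pi> "B - A"] by linarith
  qed
  have sub: "B - K \<subseteq> ((B - A) \<union> ((B \<inter> A) - F)) \<union> ((UNIV - K0) \<union> D)"
    unfolding K_def L_def D_def by blast
  have s1: "B - A \<in> sets \<pi>" "(B \<inter> A) - F \<in> sets \<pi>" "UNIV - K0 \<in> sets \<pi>"
    using Bs As Fs Us K0s by auto
  have "measure \<pi> (B - K) \<le> measure \<pi> (((B - A) \<union> ((B \<inter> A) - F)) \<union> ((UNIV - K0) \<union> D))"
    by (rule finite_measure_mono[OF sub]) (use s1 Ds in auto)
  also have "\<dots> \<le> measure \<pi> ((B - A) \<union> ((B \<inter> A) - F)) + measure \<pi> ((UNIV - K0) \<union> D)"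
    by (rule measure_Un_le) (use s1 Ds in auto)
  also have "\<dots> \<le> (measure \<pi> (B - A) + measure \<pi> ((B \<inter> A) - F)) + (measure \<pi> (UNIV - K0) + measure \<pi> D)"
    using measure_Un_le[of "B - A" \<pi> "(B \<inter> A) - F"] measure_Un_le[of "UNIV - K0" \<pi> D] s1 Ds
    by (intro add_mono) auto
  also have "\<dots> < e" using mA mF K0(2) mD e by linarith
  finally have mBK: "measure \<pi> (B - K) < e" .
  have "measure \<pi> (B - K) = measure \<pi> B - measure \<pi> K"
    by (rule finite_measure_Diff[OF Bs Ks]) (use KBA in blast)
  hence "measure \<pi> B \<le> measure \<pi> K + e" using mBK by linarith
  moreover have "K \<subseteq> B" using KBA by blast
  ultimately show ?thesis using Kcomp by blast
qed

lemma supp_separable: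
  fixes \<nu> :: "'a::metric_space measure"
  assumes rad: "radon_measure \<nu>"
  shows "\<exists>D. countable D \<and> supp \<nu> \<subseteq> closure D"
proof -
  have sb: "sets \<nu> = sets borel" and fm: "finite_measure \<nu>"
    and reg: "\<And>B. B \<in> sets borel \<Longrightarrow> emeasure \<nu> B = (SUP K\<in>{K. compact K \<and> K \<subseteq> B}. emeasure \<nu> K)"
    using rad unfolding radon_measure_def by auto
  interpret finite_measure \<nu> by (rule fm)
  have sp: "space \<nu> = UNIV" using sets_eq_imp_space_eq[OF sb] by simp
  have Us: "UNIV \<in> sets \<nu>" using sets.top sp by metis
  have "\<forall>n. \<exists>K. compact K \<and> measure \<nu> (UNIV - K) < 1/Suc n"
  proof
    fix n :: nat
    define t where "t = measure \<nu> UNIV"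
    show "\<exists>K. compact K \<and> measure \<nu> (UNIV - K) < 1/Suc n"
    proof (cases "t < 1/Suc n")
      case True
      thus ?thesis by (intro exI[of _ "{}"]) (simp add: t_def)
    next
      case False
      hence t0: "0 \<le> t - 1/Suc n" by simp
      have "ennreal (t - 1/Suc n) < ennreal t"
        using False by (subst ennreal_less_iff[OF t0]) simp
      also have "ennreal t = emeasure \<nu> UNIV" unfolding t_def using emeasure_eq_measure by simp
      also have "\<dots> = (SUP K\<in>{K. compact K \<and> K \<subseteq> UNIV}. emeasure \<nu> K)" by (rule reg) simp
      finally obtain K where K: "compact K" "ennreal (t - 1/Suc n) < emeasure \<nu> K"
        unfolding less_SUP_iff by blast
      have Ks: "K \<in> sets \<nu>" using K(1) sb by (auto intro: borel_closed compact_imp_closed)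
      have "t - 1/Suc n < measure \<nu> K"
        using K(2) unfolding emeasure_eq_measure ennreal_less_iff[OF t0] .
      moreover have "measure \<nu> (UNIV - K) = t - measure \<nu> K"
        unfolding t_def by (rule finite_measure_Diff[OF Us Ks]) simp
      ultimately show ?thesis using K(1) by (intro exI[of _ K]) simp
    qed
  qed
  from choice[OF this] obtain Kn where Kn: "\<And>n. compact (Kn n)" "\<And>n. measure \<nu> (UNIV - Kn n) < 1/Suc n"
    by blast
  have "\<forall>n j. \<exists>k. finite k \<and> k \<subseteq> Kn n \<and> Kn n \<subseteq> (\<Union>x\<in>k. ball x (1/Suc j))"
  proof (intro allI)
    fix n j
    have "seq_compact (Kn n)" using Kn(1) by (rule compact_imp_seq_compact)
    from seq_compact_imp_totally_bounded[OF this, rule_format, of "1/Suc j"]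
    show "\<exists>k. finite k \<and> k \<subseteq> Kn n \<and> Kn n \<subseteq> (\<Union>x\<in>k. ball x (1/Suc j))" by simp
  qed
  then obtain Dk where Dk: "\<And>n j. finite (Dk n j)" "\<And>n j. Kn n \<subseteq> (\<Union>x\<in>Dk n j. ball x (1/Suc j))"
    by metis
  define D where "D = (\<Union>n. \<Union>j. Dk n j)"
  have cD: "countable D" unfolding D_def using Dk(1) by (intro countable_UN) (auto intro: countable_finite)
  have KD: "Kn n \<subseteq> closure D" for n
  proof
    fix x assume x: "x \<in> Kn n"
    show "x \<in> closure D" unfolding closure_approachable
    proof (intro allI impI)
      fix \<epsilon> :: real assume "\<epsilon> > 0"
      then obtain j where j: "inverse (real (Suc j)) < \<epsilon>" using reals_Archimedean by blast
      from x Dk(2)[of n j] obtain y where y: "y \<in> Dk n j" "dist y x < 1/Suc j" by auto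
      have "y \<in> D" unfolding D_def using y(1) by blast
      moreover have "dist y x < \<epsilon>" using y(2) j by (simp add: inverse_eq_divide)
      ultimately show "\<exists>y\<in>D. dist y x < \<epsilon>" by blast
    qed
  qed
  have "supp \<nu> \<subseteq> closure D"
  proof
    fix x assume xs: "x \<in> supp \<nu>"
    show "x \<in> closure D"
    proof (rule ccontr)
      assume xn: "x \<notin> closure D"
      define Ob where "Ob = - closure D"
      have Oo: "open Ob" unfolding Ob_def by auto
      have Os: "Ob \<in> sets \<nu>" using Oo sb by auto
      have le: "measure \<nu> Ob < 1/Suc n" for n
      proof -
        have sub: "Ob \<subseteq> UNIV - Kn n" using KD[of n] unfolding Ob_def by blast
        have Kns: "Kn n \<in> sets \<nu>" using Kn(1)[of n] sb by (auto intro: borel_closed compact_imp_closed)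
        have "measure \<nu> Ob \<le> measure \<nu> (UNIV - Kn n)"
          by (rule finite_measure_mono[OF sub sets.Diff[OF Us Kns]])
        thus ?thesis using Kn(2)[of n] by linarith
      qed
      have "measure \<nu> Ob \<le> 0"
      proof (rule ccontr)
        assume "\<not> measure \<nu> Ob \<le> 0"
        then obtain n where "inverse (real (Suc n)) < measure \<nu> Ob" using reals_Archimedean[of "measure \<nu> Ob"] by auto
        thus False using le[of n] by (simp add: inverse_eq_divide)
      qed
      hence "measure \<nu> Ob = 0" using measure_nonneg[of \<nu> Ob] by linarith
      hence "emeasure \<nu> Ob = 0" using emeasure_eq_measure by simp
      hence "Ob \<in> {U. open U \<and> emeasure \<nu> U = 0}" using Oo by blast
      moreover have "x \<in> Ob" using xn unfolding Ob_def by simp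
      ultimately have "x \<notin> supp \<nu>" unfolding supp_def by blast
      thus False using xs by blast
    qed
  qed
  thus ?thesis using cD by blast
qed

lemma base_from_dense:
  fixes A D :: "'a::metric_space set"
  assumes cD: "countable D" and AD: "A \<subseteq> closure D"
  shows "\<exists>U::nat \<Rightarrow> 'a set. (\<forall>n. open (U n)) \<and> (\<forall>x c. x \<in> A \<longrightarrow> open c \<longrightarrow> x \<in> c \<longrightarrow> (\<exists>n. x \<in> U n \<and> U n \<subseteq> c))"
proof (cases "D = {}")
  case True
  hence "A = {}" using AD by simp
  thus ?thesis by (intro exI[of _ "\<lambda>_. {}"]) simp
next
  case False
  define P where "P = D \<times> (UNIV :: nat set)"
  have cP: "countable P" unfolding P_def using cD by simp
  define f where "f = from_nat_into P"
  define U where "U n = ball (fst (f n)) (1 / Suc (snd (f n)))" for n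
  have "\<forall>x c. x \<in> A \<longrightarrow> open c \<longrightarrow> x \<in> c \<longrightarrow> (\<exists>n. x \<in> U n \<and> U n \<subseteq> c)"
  proof (intro allI impI)
    fix x c assume x: "x \<in> A" and c: "open c" "x \<in> c"
    obtain r where r: "r > 0" "ball x r \<subseteq> c" using c open_contains_ball by blast
    have "r/2 > 0" using r(1) by simp
    from reals_Archimedean[OF this] obtain k where k: "inverse (real (Suc k)) < r/2" by blast
    have "x \<in> closure D" using x AD by blast
    hence "\<forall>\<epsilon>>0. \<exists>y\<in>D. dist y x < \<epsilon>" unfolding closure_approachable .
    from this[rule_format, of "1/Suc k"] obtain a where a: "a \<in> D" "dist a x < 1/Suc k"
      by auto
    have aP: "(a, k) \<in> P" unfolding P_def using a(1) by simp
    define n where "n = to_nat_on P (a, k)"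
    have fn: "f n = (a, k)" unfolding f_def n_def using from_nat_into_to_nat_on[OF cP aP] .
    have Un: "U n = ball a (1/Suc k)" unfolding U_def fn by simp
    have "x \<in> U n" unfolding Un using a(2) by simp
    moreover have "U n \<subseteq> c"
    proof
      fix y assume "y \<in> U n"
      hence "dist a y < 1/Suc k" unfolding Un by simp
      moreover have "dist x y \<le> dist a x + dist a y" using dist_triangle[of x y a] by (simp add: dist_commute)
      moreover have "1/Suc k < r/2" using k by (simp add: inverse_eq_divide)
      ultimately have "dist x y < r" using a(2) by linarith
      thus "y \<in> c" using r(2) by auto
    qed
    ultimately show "\<exists>n. x \<in> U n \<and> U n \<subseteq> c" by blast
  qed
  moreover have "\<forall>n. open (U n)" unfolding U_def by simp
  ultimately show ?thesis by blast
qed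

theorem proposition3p7:
  fixes \<nu> \<pi> :: "'a::metric_space measure" and A :: "'a set" and R :: real
  assumes "R > 0"
    and "standard_borel_space TYPE('a)"
    and "sets \<nu> = sets borel" and "prob_space \<nu>" and "radon_measure \<nu>"
    and "closed A" and "A \<subseteq> supp \<nu>"
    and "maxent_posterior \<nu> R A \<pi>"
  shows "radon_measure \<pi> \<and> prob_space \<pi> \<and> emeasure \<pi> (UNIV - A) = 0"
proof -
  note R = assms(1) and Acl = assms(6)
  define \<mu>s where "\<mu>s = (\<lambda>\<sigma>. THE \<mu>. maxent_minimizer \<nu> R A \<sigma> \<mu>)"
  have ex1: "\<And>\<sigma>. \<sigma> > 0 \<Longrightarrow> \<exists>!\<mu>. maxent_minimizer \<nu> R A \<sigma> \<mu>"
    and wc: "weak_conv_at_0 \<mu>s \<pi>"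
    using assms(8) unfolding maxent_posterior_def \<mu>s_def by auto
  have mn: "maxent_minimizer \<nu> R A \<sigma> (\<mu>s \<sigma>)" if "\<sigma> > 0" for \<sigma>
    unfolding \<mu>s_def using theI'[OF ex1[OF that]] .
  have feas: "sets (\<mu>s \<sigma>) = sets borel" "prob_space (\<mu>s \<sigma>)"
      "integral\<^sup>L (\<mu>s \<sigma>) (\<lambda>x. (distR R A x)\<^sup>2) \<le> \<sigma>\<^sup>2" if "\<sigma> > 0" for \<sigma>
    using mn[OF that] unfolding maxent_minimizer_def maxent_feasible_def by auto
  have Ane: "A \<noteq> {}"
  proof
    assume A0: "A = {}"
    have "R/2 > 0" using R by simp
    note f = feas[OF this]
    have "integral\<^sup>L (\<mu>s (R/2)) (\<lambda>x. (distR R A x)\<^sup>2) = R\<^sup>2"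
      using f(2) unfolding distR_def A0 by (simp add: prob_space.prob_space)
    with f(3) have "R\<^sup>2 \<le> (R/2)\<^sup>2" by simp
    thus False using R by (simp add: power2_eq_square)
  qed
  have sbp: "sets \<pi> = sets borel" and fmp: "finite_measure \<pi>"
    and lim: "\<And>f::'a \<Rightarrow> real. continuous_on UNIV f \<Longrightarrow> bounded (range f) \<Longrightarrow>
       ((\<lambda>\<sigma>. integral\<^sup>L (\<mu>s \<sigma>) f) \<longlongrightarrow> integral\<^sup>L \<pi> f) (at_right 0)"
    using wc unfolding weak_conv_at_0_def by auto
  interpret fp: finite_measure \<pi> by (rule fmp)
  have spp: "space \<pi> = UNIV" using sets_eq_imp_space_eq[OF sbp] by simp
  have "((\<lambda>\<sigma>. integral\<^sup>L (\<mu>s \<sigma>) (\<lambda>_. 1::real)) \<longlongrightarrow> integral\<^sup>L \<pi> (\<lambda>_. 1::real)) (at_right 0)"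
    by (rule lim) auto
  moreover have "eventually (\<lambda>\<sigma>. integral\<^sup>L (\<mu>s \<sigma>) (\<lambda>_. 1::real) = 1) (at_right 0)"
    unfolding eventually_at_right_field
    by (rule exI[of _ 1]) (auto simp: feas(2) prob_space.prob_space)
  ultimately have "((\<lambda>_::real. 1::real) \<longlongrightarrow> integral\<^sup>L \<pi> (\<lambda>_. 1::real)) (at_right 0)"
    by (rule Lim_transform_eventually[where g="\<lambda>_. 1::real"])
  hence "integral\<^sup>L \<pi> (\<lambda>_. 1::real) = 1"
    using tendsto_unique[OF trivial_limit_at_right_real] tendsto_const by metis
  hence m1: "measure \<pi> UNIV = 1" using spp by simp
  have pp: "prob_space \<pi>"
    by (rule prob_spaceI) (simp add: spp fp.emeasure_eq_measure m1)
  define f where "f x = (min (infdist x A) R)\<^sup>2" for x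
  have fd: "(distR R A x)\<^sup>2 = f x" for x unfolding distR_def f_def using Ane by simp
  have fc: "continuous_on UNIV f" unfolding f_def
    by (intro continuous_intros)
  have fb0: "0 \<le> f x" "f x \<le> R\<^sup>2" for x
  proof -
    have "0 \<le> min (infdist x A) R" using R infdist_nonneg[of x A] by simp
    moreover have "min (infdist x A) R \<le> R" by simp
    ultimately show "0 \<le> f x" "f x \<le> R\<^sup>2" unfolding f_def by (auto intro: power_mono)
  qed
  have fbd: "bounded (range f)" unfolding bounded_iff
    by (rule exI[of _ "R\<^sup>2"]) (use fb0 in auto)
  have limf: "((\<lambda>\<sigma>. integral\<^sup>L (\<mu>s \<sigma>) f) \<longlongrightarrow> integral\<^sup>L \<pi> f) (at_right 0)"
    by (rule lim[OF fc fbd])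
  have limsq: "((\<lambda>\<sigma>::real. \<sigma>\<^sup>2) \<longlongrightarrow> 0) (at_right 0)"
    by (rule tendsto_eq_intros) (auto intro: tendsto_ident_at)
  have evle: "eventually (\<lambda>\<sigma>. integral\<^sup>L (\<mu>s \<sigma>) f \<le> \<sigma>\<^sup>2) (at_right 0)"
    unfolding eventually_at_right_field
    by (rule exI[of _ 1]) (use feas(3) fd in auto)
  have "integral\<^sup>L \<pi> f \<le> 0"
    by (rule tendsto_le[OF trivial_limit_at_right_real limsq limf evle])
  moreover have "integral\<^sup>L \<pi> f \<ge> 0" using fb0 by (intro Bochner_Integration.integral_nonneg) auto
  ultimately have int0: "integral\<^sup>L \<pi> f = 0" by linarith
  have fmeas: "f \<in> borel_measurable \<pi>"
    using borel_measurable_continuous_onI[OF fc] measurable_cong_sets[OF sbp refl] by blast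
  have fint: "integrable \<pi> f"
    by (rule fp.integrable_const_bound[where B="R\<^sup>2"]) (use fb0 fmeas in auto)
  have "AE x in \<pi>. f x = 0"
    using integral_nonneg_eq_0_iff_AE[OF fint] int0 fb0 by simp
  hence AEA: "AE x in \<pi>. x \<in> A"
  proof (rule AE_mp, intro AE_I2 impI)
    fix x assume "f x = 0"
    hence "min (infdist x A) R = 0" unfolding f_def by simp
    hence "infdist x A = 0" using R by (simp add: min_def split: if_splits)
    hence "x \<in> closure A" using in_closure_iff_infdist_zero[OF Ane] by simp
    thus "x \<in> A" using Acl by (simp add: closure_closed)
  qed
  have As: "UNIV - A \<in> sets \<pi>" using Acl sbp by auto
  have null: "emeasure \<pi> (UNIV - A) = 0"
    using AEA AE_iff_measurable[OF As, of "\<lambda>x. x \<in> A"] spp by auto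
  obtain X :: "'a topology" where X: "topspace X = UNIV" "completely_metrizable_space X" "separable_space X"
    "sigma_sets UNIV {U. openin X U} = sets (borel :: 'a measure)"
    using assms(2) unfolding standard_borel_space_def by blast
  obtain M m where Mm: "Metric_space M m" "Metric_space.mcomplete M m" "X = Metric_space.mtopology M m"
    using X(2) unfolding completely_metrizable_space_def by blast
  have MU: "M = UNIV" using X(1) Mm(3) Metric_space.topspace_mtopology[OF Mm(1)] by simp
  note Mm = Mm[unfolded MU]
  obtain D where D: "countable D" "supp \<nu> \<subseteq> closure D" using supp_separable[OF assms(5)] by blast
  obtain U :: "nat \<Rightarrow> 'a set" where U: "\<And>n. open (U n)"
    "\<And>x c. x \<in> A \<Longrightarrow> open c \<Longrightarrow> x \<in> c \<Longrightarrow> \<exists>n. x \<in> U n \<and> U n \<subseteq> c"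
    using base_from_dense[OF D(1), of A] D(2) assms(7) by blast
  have rad: "radon_measure \<pi>"
    unfolding radon_measure_def
  proof (intro conjI ballI)
    show "sets \<pi> = sets borel" by (rule sbp)
    show "finite_measure \<pi>" by (rule fmp)
    fix B :: "'a set" assume B: "B \<in> sets borel"
    show "emeasure \<pi> B = (SUP K\<in>{K. compact K \<and> K \<subseteq> B}. emeasure \<pi> K)"
    proof (rule ennreal_approx_SUP)
      fix K assume "K \<in> {K. compact K \<and> K \<subseteq> B}"
      hence "compact K" "K \<subseteq> B" by auto
      thus "emeasure \<pi> K \<le> emeasure \<pi> B"
        using B sbp by (intro emeasure_mono) auto
    next
      fix e :: real assume e: "e > 0"
      from tight_main[OF fmp sbp Mm(1) Mm(2) X(3)[unfolded Mm(3)] X(4)[unfolded Mm(3)] Acl null U(1) U(2) B e]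
      obtain K where K: "compact K" "K \<subseteq> B" "measure \<pi> B \<le> measure \<pi> K + e" by blast
      have "emeasure \<pi> B = ennreal (measure \<pi> B)" by (rule fp.emeasure_eq_measure)
      also have "\<dots> \<le> ennreal (measure \<pi> K + e)" using K(3) by (rule ennreal_leI)
      also have "\<dots> = emeasure \<pi> K + ennreal e"
        using e by (simp add: fp.emeasure_eq_measure)
      finally show "\<exists>K\<in>{K. compact K \<and> K \<subseteq> B}. emeasure \<pi> B \<le> emeasure \<pi> K + ennreal e"
        using K(1,2) by blast
    qed
  qed
  show ?thesis using rad pp null by blast
qed

end
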